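(* Let $S=\{(x_i,y_i)\}_{i=1}^n$ be a training set, $\{f_\theta\}$ a parameterized family of classifiers, $1\le k\le n$, and let $\hat\theta\in\arg\min_\theta L_{\textrm{close-}k}(\{\ell(y_i,f_\theta(x_i))\}_{i=1}^n)$. Then $$L_{0-1}(\hat\theta)\le \min_\theta L_{0-1}(\{(y_i,f_\theta(x_i))\}_{i=1}^n) + k - 1,$$ where $L_{0-1}(\theta)$ denotes the number of training examples misclassified by $f_\theta$.
   Context: Binary classification with labels $y\in\{-1,+1\}$ and real-valued predictions. An individual loss $\ell(y,f(x))\ge 0$ comes with a threshold $T$ such that an example is correctly classified iff its individual loss is below $T$ (e.g. logistic loss with $T=\log 2$, hinge loss with $T=1$). Given individual losses $\ell_1,\dots,\ell_n$, let $\ell_{[i]}$ be the individual loss with the $i$-th smallest value of $|\ell_j-T|$. For a constant $M$ at least as large as every individual loss that occurs, the close-$k$ aggregate loss is $L_{\textrm{close-}k}(\{\ell_i\})=\sum_{i=1}^n c_i$ with $c_i=\ell_{[i]}$ if $i\le k$, $c_i=0$ if $i>k$ and $\ell_{[i]}$ is correctly classified, and $c_i=M$ if $i>k$ and $\ell_{[i]}$ is incorrectly classified. $L_{0-1}(\{(y_i,f_\theta(x_i))\})$ is the number of $i$ with $y_i\ne\mathrm{sgn} f_\theta(x_i)$. *)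

theory Defs
  imports Complex_Main
begin

text \<open>The losses are ordered by increasing distance to T (ties broken
  stably by original position, via sort_key); the first k keep their own value,
  the remaining ones contribute 0 if correctly classified (loss below T) and M otherwise.\<close>
definition close_k :: "real \<Rightarrow> real \<Rightarrow> nat \<Rightarrow> real list \<Rightarrow> real" where
  "close_k T M k ls =
     (let s = sort_key (\<lambda>l. \<bar>l - T\<bar>) ls
      in sum_list (map (\<lambda>(i, l). if i < k then l else if l < T then 0 else M)
                      (enumerate 0 s)))"

definition L01 :: "nat \<Rightarrow> ('x \<Rightarrow> real) \<Rightarrow> (nat \<Rightarrow> 'x) \<Rightarrow> (nat \<Rightarrow> real) \<Rightarrow> nat" where
  "L01 n g x y = card {i. i < n \<and> y i \<noteq> sgn (g (x i))}"

end

theory Submission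
  imports Defs
begin

definition cterm :: "real \<Rightarrow> real \<Rightarrow> nat \<Rightarrow> nat \<times> real \<Rightarrow> real" where
  "cterm T M k = (\<lambda>(i, l). if i < k then l else if l < T then 0 else M)"

lemma lower_aux:
  assumes "\<forall>l\<in>set s. 0 \<le> l \<and> l \<le> M" "T \<le> M"
  shows "sum_list (map (cterm T M k) (enumerate j s))
     \<ge> M * real (length (filter (\<lambda>l. T \<le> l) s)) - (M - T) * real (k - j)"
  using assms
proof (induction s arbitrary: j)
  case Nil
  then show ?case by simp
next
  case (Cons a s)
  have IH: "sum_list (map (cterm T M k) (enumerate (Suc j) s))
     \<ge> M * real (length (filter (\<lambda>l. T \<le> l) s)) - (M - T) * real (k - Suc j)"
    using Cons by simp
  have "cterm T M k (j, a) \<ge> (if T \<le> a then M else 0) - (M - T) * (real (k - j) - real (k - Suc j))"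
    using Cons.prems by (auto simp: cterm_def of_nat_diff)
  then show ?case using IH by (auto simp: algebra_simps)
qed

lemma upper_aux:
  assumes "\<forall>l\<in>set s. 0 \<le> l \<and> l \<le> M" "0 < T"
  shows "sum_list (map (cterm T M k) (enumerate j s))
     \<le> M * real (length (filter (\<lambda>l. T \<le> l) s)) + T * real (k - j)
   \<and> (j < k \<and> s \<noteq> [] \<longrightarrow> sum_list (map (cterm T M k) (enumerate j s))
     < M * real (length (filter (\<lambda>l. T \<le> l) s)) + T * real (k - j))"
  using assms
proof (induction s arbitrary: j)
  case Nil
  then show ?case by simp
next
  case (Cons a s)
  have IH: "sum_list (map (cterm T M k) (enumerate (Suc j) s))
     \<le> M * real (length (filter (\<lambda>l. T \<le> l) s)) + T * real (k - Suc j)"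
    using Cons by simp
  have A: "cterm T M k (j, a) \<le> (if T \<le> a then M else 0) + T * (real (k - j) - real (k - Suc j))"
    using Cons.prems by (auto simp: cterm_def of_nat_diff)
  have B: "j < k \<Longrightarrow> cterm T M k (j, a) < (if T \<le> a then M else 0) + T * (real (k - j) - real (k - Suc j))"
    using Cons.prems by (auto simp: cterm_def of_nat_diff)
  show ?case using IH A B by (auto simp: algebra_simps)
qed

lemma close_k_eq: "close_k T M k ls = sum_list (map (cterm T M k) (enumerate 0 (sort_key (\<lambda>l. \<bar>l - T\<bar>) ls)))"
  unfolding close_k_def cterm_def Let_def by simp

lemma len_filter_sort: "length (filter P (sort_key g ls)) = length (filter P ls)"
  by (simp add: filter_sort)

lemma close_lower:
  assumes "\<forall>l\<in>set ls. 0 \<le> l \<and> l \<le> M" "T \<le> M"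
  shows "close_k T M k ls \<ge> M * real (length (filter (\<lambda>l. T \<le> l) ls)) - (M - T) * real k"
proof -
  have "\<forall>l\<in>set (sort_key (\<lambda>l. \<bar>l - T\<bar>) ls). 0 \<le> l \<and> l \<le> M" using assms by simp
  from lower_aux[OF this assms(2), of k 0] show ?thesis
    by (simp add: close_k_eq len_filter_sort)
qed

lemma close_upper:
  assumes "\<forall>l\<in>set ls. 0 \<le> l \<and> l \<le> M" "0 < T" "1 \<le> k" "ls \<noteq> []"
  shows "close_k T M k ls < M * real (length (filter (\<lambda>l. T \<le> l) ls)) + T * real k"
proof -
  have "\<forall>l\<in>set (sort_key (\<lambda>l. \<bar>l - T\<bar>) ls). 0 \<le> l \<and> l \<le> M" using assms by simp
  moreover have "sort_key (\<lambda>l. \<bar>l - T\<bar>) ls \<noteq> []" using assms(4)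
    by (metis length_0_conv length_sort)
  ultimately show ?thesis using upper_aux[of "sort_key (\<lambda>l. \<bar>l - T\<bar>) ls" M T k 0] assms
    by (simp add: close_k_eq len_filter_sort)
qed

theorem lemma2:
  fixes x :: "nat \<Rightarrow> 'x" and y :: "nat \<Rightarrow> real"
    and f :: "'p \<Rightarrow> 'x \<Rightarrow> real"
    and loss :: "real \<Rightarrow> real \<Rightarrow> real"
    and T M :: real and n k :: nat and \<theta>h :: 'p
  assumes labels: "\<forall>i<n. y i \<in> {-1, 1}"
    and loss_nonneg: "\<forall>c\<in>{-1, 1}. \<forall>z. 0 \<le> loss c z"
    and threshold: "\<forall>c\<in>{-1, 1}. \<forall>z. loss c z < T \<longleftrightarrow> c = sgn z"
    and M_bound: "\<forall>\<theta>. \<forall>i<n. loss (y i) (f \<theta> (x i)) \<le> M"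
    and k_pos: "1 \<le> k" and k_le: "k \<le> n"
    and argmin: "\<forall>\<theta>. close_k T M k (map (\<lambda>i. loss (y i) (f \<theta>h (x i))) [0..<n])
                      \<le> close_k T M k (map (\<lambda>i. loss (y i) (f \<theta> (x i))) [0..<n])"
  shows "L01 n (f \<theta>h) x y \<le> Min (range (\<lambda>\<theta>. L01 n (f \<theta>) x y)) + k - 1"
proof -
  define ls where "ls \<theta> = map (\<lambda>i. loss (y i) (f \<theta> (x i))) [0..<n]" for \<theta>
  have T_pos: "0 < T"
    using threshold loss_nonneg by (metis insertCI order_le_less_trans sgn_one)
  have cnt: "length (filter (\<lambda>l. T \<le> l) (ls \<theta>)) = L01 n (f \<theta>) x y" for \<theta>
  proof -
    have "length (filter (\<lambda>l. T \<le> l) (ls \<theta>)) = card {i. i < n \<and> T \<le> loss (y i) (f \<theta> (x i))}"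
      unfolding ls_def length_filter_conv_card by (auto intro!: arg_cong[where f=card])
    also have "{i. i < n \<and> T \<le> loss (y i) (f \<theta> (x i))} = {i. i < n \<and> y i \<noteq> sgn (f \<theta> (x i))}"
      using labels threshold by (auto simp: not_less[symmetric])
    finally show ?thesis unfolding L01_def .
  qed
  have rng: "\<forall>l\<in>set (ls \<theta>). 0 \<le> l \<and> l \<le> M" for \<theta>
    using labels loss_nonneg M_bound unfolding ls_def by auto
  have fin: "finite (range (\<lambda>\<theta>. L01 n (f \<theta>) x y))"
  proof (rule finite_subset)
    show "range (\<lambda>\<theta>. L01 n (f \<theta>) x y) \<subseteq> {..n}"
      unfolding L01_def by (auto intro: card_mono[where B="{..<n}", simplified, THEN le_trans])
  qed simp
  obtain \<theta>s where ts: "L01 n (f \<theta>s) x y = Min (range (\<lambda>\<theta>. L01 n (f \<theta>) x y))"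
    using Min_in[OF fin] by auto
  show ?thesis
  proof (rule ccontr)
    assume "\<not> ?thesis"
    then have big: "L01 n (f \<theta>h) x y \<ge> L01 n (f \<theta>s) x y + k" using ts k_pos by linarith
    then have "L01 n (f \<theta>h) x y \<ge> 1" using k_pos by linarith
    then have "length (filter (\<lambda>l. T \<le> l) (ls \<theta>h)) \<noteq> 0" using cnt by simp
    then obtain l where "l \<in> set (ls \<theta>h)" "T \<le> l"
      by (metis filter_False length_0_conv)
    then have TM: "T \<le> M" using rng by force
    have ne: "ls \<theta>s \<noteq> []" using k_pos k_le unfolding ls_def by auto
    have lo: "close_k T M k (ls \<theta>h) \<ge> M * real (L01 n (f \<theta>h) x y) - (M - T) * real k"
      using close_lower[OF rng TM] cnt by metis
    have up: "close_k T M k (ls \<theta>s) < M * real (L01 n (f \<theta>s) x y) + T * real k"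
      using close_upper[OF rng T_pos k_pos ne] cnt by metis
    have am: "close_k T M k (ls \<theta>h) \<le> close_k T M k (ls \<theta>s)" using argmin unfolding ls_def by blast
    have "M * real (L01 n (f \<theta>h) x y) \<ge> M * (real (L01 n (f \<theta>s) x y) + real k)"
      using big TM T_pos by (intro mult_left_mono) auto
    then show False using lo up am by (auto simp: algebra_simps)
  qed
qed

end
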